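(* Let $P\subset\mathbb{R}^N$ be a polytope with vertex set $\{v_1,\dots,v_M\}$, and let $v:\mathbb{R}^N\to\{v_1,\dots,v_M\}$ assign to each $x$ a vertex of $P$ closest to $x$ in Euclidean norm (with some fixed tie-breaking rule). For a vertex $v_i$ let $C_1(v_i)$ denote the set of unit outward normals of supporting hyperplanes of $P$ at $v_i$, i.e. $C_1(v_i)=\{u\in\mathbb{R}^N:\|u\|=1,\ u\cdot(p-v_i)\le 0\ \text{for all } p\in P\}$. Then for each $\varepsilon>0$ there exists $D>0$ such that whenever $\|x\|>D$, $$d\Big(\frac{x}{\|x\|},\,C_1(v(x))\Big)<\varepsilon.$$
   Context: $d$ denotes Euclidean distance between a point and a set. *)

theory Defs
  imports "HOL-Analysis.Analysis"
begin

definition unit_normal_cone :: "'a::euclidean_space set \<Rightarrow> 'a \<Rightarrow> 'a set" where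
  "unit_normal_cone P w = {u. norm u = 1 \<and> (\<forall>p\<in>P. inner u (p - w) \<le> 0)}"

end

theory Submission
  imports Defs
begin

lemma vertex_bound:
  fixes x w w' :: "'a::euclidean_space"
  assumes "dist x w \<le> dist x w'"
  shows "2 * inner x (w' - w) \<le> norm w' ^ 2"
proof -
  have "norm (x - w) ^ 2 \<le> norm (x - w') ^ 2"
    using assms by (simp add: dist_norm power_mono)
  hence "inner (x - w) (x - w) \<le> inner (x - w') (x - w')"
    by (simp add: power2_norm_eq_inner)
  hence "2 * inner x (w' - w) \<le> inner w' w' - inner w w"
    by (simp add: inner_diff inner_commute algebra_simps)
  moreover have "inner w w \<ge> 0" by simp
  ultimately show ?thesis by (simp add: power2_norm_eq_inner del: inner_ge_zero)
qed

theorem proposition3p1: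
  fixes P :: "'a::euclidean_space set" and S :: "'a set" and v :: "'a \<Rightarrow> 'a" and \<epsilon> :: real
  assumes "finite S" and "S \<noteq> {}" and "P = convex hull S"
    and "\<And>x. v x \<in> {w. w extreme_point_of P}"
    and "\<And>x w. w extreme_point_of P \<Longrightarrow> dist x (v x) \<le> dist x w"
    and "\<epsilon> > 0"
  shows "\<exists>D>0. \<forall>x. norm x > D \<longrightarrow>
           infdist (x /\<^sub>R norm x) (unit_normal_cone P (v x)) < \<epsilon>"
proof -
  define V where "V = {w. w extreme_point_of P}"
  have VS: "V \<subseteq> S" unfolding V_def assms(3) using extreme_point_of_convex_hull by blast
  have finV: "finite V" using VS assms(1) finite_subset by blast
  have cP: "compact P" "convex P" using assms(1,3)
    by (simp_all add: compact_convex_hull finite_imp_compact)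
  have PV: "P = convex hull V" unfolding V_def using Krein_Milman_Minkowski[OF cP] .
  define B where "B = (\<Sum>w'\<in>V. norm w' ^ 2)"
  have B0: "B \<ge> 0" unfolding B_def by (simp add: sum_nonneg)
  have Bw: "norm w' ^ 2 \<le> B" if "w' \<in> V" for w'
    unfolding B_def using finV that by (intro member_le_sum) auto
  have key: "\<forall>\<^sub>F x in at_infinity. v x = w \<longrightarrow>
           infdist (x /\<^sub>R norm x) (unit_normal_cone P (v x)) < \<epsilon>" if wV: "w \<in> V" for w
  proof -
    define C where "C = unit_normal_cone P w"
    define A where "A = sphere (0::'a) 1 \<inter> {y. \<epsilon> \<le> infdist y C}"
    define g where "g = (\<lambda>y. \<Sum>w'\<in>V. max 0 (inner y (w' - w)))"
    have cA: "compact A" unfolding A_def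
      by (intro compact_Int_closed compact_sphere closed_Collect_le continuous_intros continuous_on_infdist)
    have gc: "continuous_on A g" unfolding g_def by (intro continuous_intros)
    have gpos: "g y > 0" if "y \<in> A" for y
    proof (rule ccontr)
      assume "\<not> g y > 0"
      hence "g y \<le> 0" by simp
      moreover have "\<forall>w'\<in>V. max 0 (inner y (w' - w)) \<ge> 0" by simp
      ultimately have "\<forall>w'\<in>V. max 0 (inner y (w' - w)) = 0"
        using sum_nonneg_eq_0_iff[OF finV] unfolding g_def
        by (metis (no_types, lifting) antisym sum_nonneg)
      hence h: "\<forall>w'\<in>V. inner y w' \<le> inner y w"
        by (metis inner_diff_right max.cobounded2 diff_le_0_iff_le)
      have "V \<subseteq> {p. inner y p \<le> inner y w}" using h by auto
      hence "P \<subseteq> {p. inner y p \<le> inner y w}" unfolding PV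
        by (intro hull_minimal convex_halfspace_le)
      moreover have "norm y = 1" using that unfolding A_def by simp
      ultimately have "y \<in> C" unfolding C_def unit_normal_cone_def
        by (auto simp: inner_diff_right)
      hence "infdist y C = 0" by (rule infdist_zero)
      thus False using that assms(6) unfolding A_def by simp
    qed
    have bnd: "g (x /\<^sub>R norm x) \<le> real (card V) * B / norm x" if "v x = w" "x \<noteq> 0" for x
    proof -
      have "max 0 (inner (x /\<^sub>R norm x) (w' - w)) \<le> B / norm x" if "w' \<in> V" for w'
      proof -
        have "2 * inner x (w' - w) \<le> norm w' ^ 2"
          using vertex_bound assms(5)[of w' x] \<open>v x = w\<close> \<open>w' \<in> V\<close> unfolding V_def by auto
        hence "inner x (w' - w) \<le> B" using Bw[OF that] B0 by linarith
        hence "inner x (w' - w) / norm x \<le> B / norm x"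
          by (simp add: divide_right_mono)
        thus ?thesis using B0 by (simp add: divide_nonneg_nonneg divide_inverse_commute)
      qed
      hence "g (x /\<^sub>R norm x) \<le> (\<Sum>w'\<in>V. B / norm x)" unfolding g_def
        by (intro sum_mono) auto
      thus ?thesis by simp
    qed
    show ?thesis
    proof (cases "A = {}")
      case True
      show ?thesis unfolding eventually_at_infinity
      proof (intro exI[of _ 1] allI impI)
        fix x :: 'a assume "1 \<le> norm x" "v x = w"
        have "x \<noteq> 0" using \<open>1 \<le> norm x\<close> by (metis norm_zero not_one_le_zero)
        hence "x /\<^sub>R norm x \<in> sphere 0 1" by (simp add: sgn_div_norm[symmetric] norm_sgn)
        hence "\<not> \<epsilon> \<le> infdist (x /\<^sub>R norm x) C" using True unfolding A_def by blast
        thus "infdist (x /\<^sub>R norm x) (unit_normal_cone P (v x)) < \<epsilon>"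
          using \<open>v x = w\<close> unfolding C_def by simp
      qed
    next
      case False
      obtain y0 where y0: "y0 \<in> A" "\<And>y. y \<in> A \<Longrightarrow> g y0 \<le> g y"
        using continuous_attains_inf[OF cA False gc] by blast
      define m where "m = g y0"
      have m0: "m > 0" unfolding m_def using gpos y0(1) .
      show ?thesis unfolding eventually_at_infinity
      proof (intro exI[of _ "real (card V) * B / m + 1"] allI impI)
        fix x :: 'a assume xb: "real (card V) * B / m + 1 \<le> norm x" and vx: "v x = w"
        have cb: "real (card V) * B / m \<ge> 0" using B0 m0 by simp
        hence nx: "norm x > 0" using xb by linarith
        hence "x \<noteq> 0" by auto
        have "real (card V) * B / m < norm x" using xb by linarith
        hence "real (card V) * B < m * norm x" using m0 by (simp add: field_simps)
        hence "real (card V) * B / norm x < m" using nx by (simp add: field_simps)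
        hence "g (x /\<^sub>R norm x) < m" using bnd[OF vx \<open>x \<noteq> 0\<close>] by linarith
        hence "x /\<^sub>R norm x \<notin> A" using y0(2) unfolding m_def by force
        moreover have "x /\<^sub>R norm x \<in> sphere 0 1" using \<open>x \<noteq> 0\<close> by (simp add: sgn_div_norm[symmetric] norm_sgn)
        ultimately show "infdist (x /\<^sub>R norm x) (unit_normal_cone P (v x)) < \<epsilon>"
          using vx unfolding A_def C_def by auto
      qed
    qed
  qed
  have "\<forall>\<^sub>F x in at_infinity. \<forall>w\<in>V. v x = w \<longrightarrow>
           infdist (x /\<^sub>R norm x) (unit_normal_cone P (v x)) < \<epsilon>"
    by (rule eventually_ball_finite[OF finV]) (rule ballI, rule key)
  then obtain b where b: "\<And>x. b \<le> norm x \<Longrightarrow> \<forall>w\<in>V. v x = w \<longrightarrow>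
           infdist (x /\<^sub>R norm x) (unit_normal_cone P (v x)) < \<epsilon>"
    unfolding eventually_at_infinity by blast
  show ?thesis
  proof (intro exI[of _ "max 1 b"] conjI allI impI)
    fix x :: 'a assume "norm x > max 1 b"
    hence "b \<le> norm x" by linarith
    moreover have "v x \<in> V" using assms(4) unfolding V_def by blast
    ultimately show "infdist (x /\<^sub>R norm x) (unit_normal_cone P (v x)) < \<epsilon>"
      using b[of x] by blast
  qed simp
qed

end
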